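(* Let $G$ be a Hausdorff étale groupoid, let $R$ be a commutative unital ring with the discrete topology, let $T \le R^\times$, and let $(\Sigma, i, q)$ be a discrete twist by $T$ over $G$. Then: (a) $\Sigma$ is étale; (b) $i$ is a homeomorphism onto an open subset of $\Sigma$; (c) for each $\alpha \in G$ there exist an open bisection $B_\alpha$ of $G$ containing $\alpha$ and a continuous map $P_\alpha\colon B_\alpha \to \Sigma$ satisfying $q \circ P_\alpha = \mathrm{id}_{B_\alpha}$, such that $(\beta,z) \mapsto i(r(\beta),z)P_\alpha(\beta)$ is a homeomorphism $B_\alpha \times T \to q^{-1}(B_\alpha)$, and additionally $P_\alpha(G^{(0)} \cap B_\alpha) \subseteq \Sigma^{(0)}$; (d) if $G$ is ample, then for each $\alpha \in G$ the open bisection $B_\alpha$ and the map $P_\alpha$ satisfying the first two properties in (c) can be chosen with $B_\alpha$ compact.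
   Context: Groupoids are locally compact Hausdorff topological groupoids; $G$ is étale if $r$ is a local homeomorphism, ample if it has a basis of compact open bisections. A discrete twist by $T$ over $G$ is a sequence $G^{(0)} \times T \xrightarrow{i} \Sigma \xrightarrow{q} G$, where $T$ carries the discrete topology, $G^{(0)} \times T$ is the trivial group bundle with fibres $T$, $\Sigma$ is a Hausdorff groupoid with $\Sigma^{(0)} = i(G^{(0)} \times \{1\})$, and $i, q$ are continuous groupoid homomorphisms restricting to homeomorphisms of unit spaces, such that: (1) $i(\{x\} \times T) = q^{-1}(x)$ for all $x \in G^{(0)}$, $i$ is injective, and $q$ is a quotient map; (2) for each $\alpha \in G$ there are an open bisection $B_\alpha \ni \alpha$ of $G$ and a continuous $P_\alpha\colon B_\alpha \to \Sigma$ with $q \circ P_\alpha = \mathrm{id}_{B_\alpha}$ such that $(\beta,z) \mapsto i(r(\beta),z)P_\alpha(\beta)$ is a homeomorphism $B_\alpha \times T \to q^{-1}(B_\alpha)$; (3) $i(r(\varepsilon),z)\varepsilon = \varepsilon\, i(s(\varepsilon),z)$ for all $\varepsilon \in \Sigma$, $z \in T$. $\Sigma^{(0)}$ is identified with $G^{(0)}$ via $q$. *)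

theory Defs
  imports "HOL-Analysis.Analysis"
begin

text \<open>The underlying set is the topspace of
  the topology gtop; units are identified with elements of the groupoid
  (unit space = image of the range map).\<close>

record 'a groupoid =
  gtop :: "'a topology"
  gr :: "'a \<Rightarrow> 'a"
  gs :: "'a \<Rightarrow> 'a"
  gmul :: "'a \<Rightarrow> 'a \<Rightarrow> 'a"
  ginv :: "'a \<Rightarrow> 'a"

definition gcarrier :: "('a, 'b) groupoid_scheme \<Rightarrow> 'a set" where
  "gcarrier G = topspace (gtop G)"

definition gunits :: "('a, 'b) groupoid_scheme \<Rightarrow> 'a set" where
  "gunits G = gr G ` gcarrier G"

definition comp_pairs :: "('a, 'b) groupoid_scheme \<Rightarrow> ('a \<times> 'a) set" where
  "comp_pairs G = {(a, b). a \<in> gcarrier G \<and> b \<in> gcarrier G \<and> gs G a = gr G b}"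

definition groupoid :: "('a, 'b) groupoid_scheme \<Rightarrow> bool" where
  "groupoid G \<longleftrightarrow>
    (\<forall>a \<in> gcarrier G.
        gr G a \<in> gcarrier G \<and> gs G a \<in> gcarrier G \<and> ginv G a \<in> gcarrier G \<and>
        gr G (gr G a) = gr G a \<and> gs G (gr G a) = gr G a \<and>
        gr G (gs G a) = gs G a \<and> gs G (gs G a) = gs G a \<and>
        gmul G (gr G a) a = a \<and> gmul G a (gs G a) = a \<and>
        gr G (ginv G a) = gs G a \<and> gs G (ginv G a) = gr G a \<and>
        gmul G a (ginv G a) = gr G a \<and> gmul G (ginv G a) a = gs G a) \<and>
    (\<forall>a b. (a, b) \<in> comp_pairs G \<longrightarrow>
        gmul G a b \<in> gcarrier G \<and> gr G (gmul G a b) = gr G a \<and> gs G (gmul G a b) = gs G b) \<and>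
    (\<forall>a b c. (a, b) \<in> comp_pairs G \<and> (b, c) \<in> comp_pairs G \<longrightarrow>
        gmul G (gmul G a b) c = gmul G a (gmul G b c))"

text \<open>Standing convention: groupoids are locally compact Hausdorff topological groupoids.\<close>

definition topological_groupoid :: "('a, 'b) groupoid_scheme \<Rightarrow> bool" where
  "topological_groupoid G \<longleftrightarrow>
    groupoid G \<and> Hausdorff_space (gtop G) \<and> locally_compact_space (gtop G) \<and>
    continuous_map (subtopology (prod_topology (gtop G) (gtop G)) (comp_pairs G)) (gtop G)
       (\<lambda>(a, b). gmul G a b) \<and>
    continuous_map (gtop G) (gtop G) (ginv G)"

definition local_homeomorphism :: "'a topology \<Rightarrow> 'b topology \<Rightarrow> ('a \<Rightarrow> 'b) \<Rightarrow> bool" where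
  "local_homeomorphism X Y f \<longleftrightarrow>
    f ` topspace X \<subseteq> topspace Y \<and>
    (\<forall>x \<in> topspace X. \<exists>U. openin X U \<and> x \<in> U \<and> openin Y (f ` U) \<and>
        homeomorphic_map (subtopology X U) (subtopology Y (f ` U)) f)"

definition etale :: "('a, 'b) groupoid_scheme \<Rightarrow> bool" where
  "etale G \<longleftrightarrow> topological_groupoid G \<and>
     local_homeomorphism (gtop G) (subtopology (gtop G) (gunits G)) (gr G)"

definition bisection :: "('a, 'b) groupoid_scheme \<Rightarrow> 'a set \<Rightarrow> bool" where
  "bisection G B \<longleftrightarrow> B \<subseteq> gcarrier G \<and> inj_on (gr G) B \<and> inj_on (gs G) B"

definition open_bisection :: "('a, 'b) groupoid_scheme \<Rightarrow> 'a set \<Rightarrow> bool" where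
  "open_bisection G B \<longleftrightarrow> openin (gtop G) B \<and> bisection G B"

definition ample :: "('a, 'b) groupoid_scheme \<Rightarrow> bool" where
  "ample G \<longleftrightarrow> etale G \<and>
     (\<forall>U x. openin (gtop G) U \<and> x \<in> U \<longrightarrow>
        (\<exists>B. open_bisection G B \<and> compactin (gtop G) B \<and> x \<in> B \<and> B \<subseteq> U))"

definition bundle_top :: "('a, 'b) groupoid_scheme \<Rightarrow> 'r set \<Rightarrow> ('a \<times> 'r) topology" where
  "bundle_top G T = prod_topology (subtopology (gtop G) (gunits G)) (discrete_topology T)"

definition local_trivialisation ::
  "('g, 'b) groupoid_scheme \<Rightarrow> 'r::times set \<Rightarrow> ('g \<times> 'r \<Rightarrow> 's) \<Rightarrow> ('s \<Rightarrow> 'g)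
     \<Rightarrow> ('s, 'c) groupoid_scheme \<Rightarrow> 'g set \<Rightarrow> ('g \<Rightarrow> 's) \<Rightarrow> bool" where
  "local_trivialisation G T i q S B P \<longleftrightarrow>
     open_bisection G B \<and>
     continuous_map (subtopology (gtop G) B) (gtop S) P \<and>
     (\<forall>\<beta> \<in> B. q (P \<beta>) = \<beta>) \<and>
     homeomorphic_map (prod_topology (subtopology (gtop G) B) (discrete_topology T))
        (subtopology (gtop S) {e \<in> gcarrier S. q e \<in> B})
        (\<lambda>(\<beta>, z). gmul S (i (gr G \<beta>, z)) (P \<beta>))"

definition discrete_twist ::
  "('g, 'b) groupoid_scheme \<Rightarrow> 'r::monoid_mult set \<Rightarrow> ('g \<times> 'r \<Rightarrow> 's) \<Rightarrow> ('s \<Rightarrow> 'g)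
     \<Rightarrow> ('s, 'c) groupoid_scheme \<Rightarrow> bool" where
  "discrete_twist G T i q S \<longleftrightarrow>
     topological_groupoid S \<and>
     gunits S = i ` (gunits G \<times> {1}) \<and>
     \<comment> \<open>i is a continuous groupoid homomorphism from the trivial bundle G^(0) \<times> T\<close>
     continuous_map (bundle_top G T) (gtop S) i \<and>
     (\<forall>x \<in> gunits G. \<forall>z \<in> T. \<forall>w \<in> T.
        gs S (i (x, z)) = gr S (i (x, w)) \<and> i (x, z * w) = gmul S (i (x, z)) (i (x, w))) \<and>
     \<comment> \<open>q is a continuous groupoid homomorphism\<close>
     continuous_map (gtop S) (gtop G) q \<and>
     (\<forall>a b. (a, b) \<in> comp_pairs S \<longrightarrow>
        gs G (q a) = gr G (q b) \<and> q (gmul S a b) = gmul G (q a) (q b)) \<and>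
     \<comment> \<open>i and q restrict to homeomorphisms of unit spaces\<close>
     homeomorphic_map (subtopology (bundle_top G T) (gunits G \<times> {1}))
        (subtopology (gtop S) (gunits S)) i \<and>
     homeomorphic_map (subtopology (gtop S) (gunits S)) (subtopology (gtop G) (gunits G)) q \<and>
     \<comment> \<open>(1)\<close>
     (\<forall>x \<in> gunits G. i ` ({x} \<times> T) = {e \<in> gcarrier S. q e = x}) \<and>
     inj_on i (gunits G \<times> T) \<and>
     quotient_map (gtop S) (gtop G) q \<and>
     \<comment> \<open>(2)\<close>
     (\<forall>\<alpha> \<in> gcarrier G. \<exists>B P. \<alpha> \<in> B \<and> local_trivialisation G T i q S B P) \<and>
     \<comment> \<open>(3), with \<Sigma>^(0) identified with G^(0) via q\<close>
     (\<forall>e \<in> gcarrier S. \<forall>z \<in> T.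
        gmul S (i (gr G (q e), z)) e = gmul S e (i (gs G (q e), z)))"

end

theory Submission
  imports Defs
begin


lemma grp_ax:
  assumes "groupoid G" "a \<in> gcarrier G"
  shows "gr G a \<in> gcarrier G" "gs G a \<in> gcarrier G" "ginv G a \<in> gcarrier G"
    "gr G (gr G a) = gr G a" "gs G (gr G a) = gr G a"
    "gr G (gs G a) = gs G a" "gs G (gs G a) = gs G a"
    "gmul G (gr G a) a = a" "gmul G a (gs G a) = a"
    "gr G (ginv G a) = gs G a" "gs G (ginv G a) = gr G a"
    "gmul G a (ginv G a) = gr G a" "gmul G (ginv G a) a = gs G a"
  using assms unfolding groupoid_def by blast+

lemma grp_mul:
  assumes "groupoid G" "a \<in> gcarrier G" "b \<in> gcarrier G" "gs G a = gr G b"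
  shows "gmul G a b \<in> gcarrier G" "gr G (gmul G a b) = gr G a" "gs G (gmul G a b) = gs G b"
proof -
  have "\<forall>a b. (a, b) \<in> comp_pairs G \<longrightarrow>
        gmul G a b \<in> gcarrier G \<and> gr G (gmul G a b) = gr G a \<and> gs G (gmul G a b) = gs G b"
    using assms(1) unfolding groupoid_def by blast
  moreover have "(a, b) \<in> comp_pairs G" using assms unfolding comp_pairs_def by blast
  ultimately show "gmul G a b \<in> gcarrier G" "gr G (gmul G a b) = gr G a" "gs G (gmul G a b) = gs G b"
    by meson+
qed

lemma grp_assoc:
  assumes "groupoid G" "a \<in> gcarrier G" "b \<in> gcarrier G" "c \<in> gcarrier G"
    "gs G a = gr G b" "gs G b = gr G c"
  shows "gmul G (gmul G a b) c = gmul G a (gmul G b c)"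
proof -
  have "\<forall>a b c. (a, b) \<in> comp_pairs G \<and> (b, c) \<in> comp_pairs G \<longrightarrow>
        gmul G (gmul G a b) c = gmul G a (gmul G b c)"
    using assms(1) unfolding groupoid_def by blast
  moreover have "(a, b) \<in> comp_pairs G" "(b, c) \<in> comp_pairs G" using assms unfolding comp_pairs_def by blast+
  ultimately show ?thesis by meson
qed

lemma units_sub:
  assumes "groupoid G" shows "gunits G \<subseteq> gcarrier G"
proof
  fix u assume "u \<in> gunits G"
  then obtain a where a: "a \<in> gcarrier G" "u = gr G a" unfolding gunits_def by blast
  then show "u \<in> gcarrier G" using grp_ax(1)[OF assms a(1)] by simp
qed

lemma unit_fix:
  assumes "groupoid G" "u \<in> gunits G"
  shows "gr G u = u" "gs G u = u"
proof -
  obtain a where a: "a \<in> gcarrier G" "u = gr G a" using assms(2) unfolding gunits_def by blast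
  show "gr G u = u" using grp_ax(4)[OF assms(1) a(1)] a(2) by simp
  show "gs G u = u" using grp_ax(5)[OF assms(1) a(1)] a(2) by simp
qed

lemma gs_unit:
  assumes "groupoid G" "a \<in> gcarrier G" shows "gs G a \<in> gunits G"
proof -
  have "gs G a = gr G (gs G a)" using grp_ax(6)[OF assms] by simp
  then show ?thesis unfolding gunits_def using grp_ax(2)[OF assms] by (metis image_eqI)
qed

lemma gr_unit: "groupoid G \<Longrightarrow> a \<in> gcarrier G \<Longrightarrow> gr G a \<in> gunits G"
  unfolding gunits_def by (rule imageI)

lemma gr_cont:
  assumes "topological_groupoid G"
  shows "continuous_map (gtop G) (gtop G) (gr G)"
proof -
  have g: "groupoid G" using assms topological_groupoid_def by blast
  have c1: "continuous_map (gtop G) (subtopology (prod_topology (gtop G) (gtop G)) (comp_pairs G))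
      (\<lambda>a. (a, ginv G a))"
    using assms g grp_ax[OF g]
    by (auto simp: continuous_map_in_subtopology continuous_map_pairedI topological_groupoid_def
        comp_pairs_def gcarrier_def)
  have "continuous_map (gtop G) (gtop G) ((\<lambda>(a, b). gmul G a b) \<circ> (\<lambda>a. (a, ginv G a)))"
    using continuous_map_compose[OF c1] assms topological_groupoid_def by blast
  then show ?thesis
    by (rule continuous_map_eq) (use grp_ax[OF g] in \<open>auto simp: gcarrier_def\<close>)
qed

lemma gs_cont:
  assumes "topological_groupoid G"
  shows "continuous_map (gtop G) (gtop G) (gs G)"
proof -
  have g: "groupoid G" using assms topological_groupoid_def by blast
  have c1: "continuous_map (gtop G) (subtopology (prod_topology (gtop G) (gtop G)) (comp_pairs G))
      (\<lambda>a. (ginv G a, a))"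
    using assms g grp_ax[OF g]
    by (auto simp: continuous_map_in_subtopology continuous_map_pairedI topological_groupoid_def
        comp_pairs_def gcarrier_def)
  have "continuous_map (gtop G) (gtop G) ((\<lambda>(a, b). gmul G a b) \<circ> (\<lambda>a. (ginv G a, a)))"
    using continuous_map_compose[OF c1] assms topological_groupoid_def by blast
  then show ?thesis
    by (rule continuous_map_eq) (use grp_ax[OF g] in \<open>auto simp: gcarrier_def\<close>)
qed

lemma local_homeo_open:
  assumes "local_homeomorphism X Y f"
  shows "open_map X Y f"
  unfolding open_map_def
proof (intro allI impI)
  fix V assume V: "openin X V"
  show "openin Y (f ` V)"
  proof (subst openin_subopen, intro ballI)
    fix y assume "y \<in> f ` V"
    then obtain x where x: "x \<in> V" "y = f x" by blast
    then have "x \<in> topspace X" using V openin_subset by blast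
    then obtain U where U: "openin X U" "x \<in> U" "openin Y (f ` U)"
      "homeomorphic_map (subtopology X U) (subtopology Y (f ` U)) f"
      using assms unfolding local_homeomorphism_def by blast
    have "openin (subtopology X U) (U \<inter> V)"
      using V by (simp add: openin_subtopology_Int2)
    then have "openin (subtopology Y (f ` U)) (f ` (U \<inter> V))"
      using U(4) homeomorphic_imp_open_map open_map_def by blast
    then have "openin Y (f ` (U \<inter> V))" using U(3) openin_trans_full by blast
    then show "\<exists>T. openin Y T \<and> y \<in> T \<and> T \<subseteq> f ` V" using x U by blast
  qed
qed

lemma open_inj_homeo:
  assumes "continuous_map X Y f" "open_map X Y f" "openin X B" "inj_on f B"
  shows "homeomorphic_map (subtopology X B) (subtopology Y (f ` B)) f"
proof (rule bijective_open_imp_homeomorphic_map)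
  have B: "B \<subseteq> topspace X" using assms(3) openin_subset by blast
  show "continuous_map (subtopology X B) (subtopology Y (f ` B)) f"
    using assms(1) by (auto simp: continuous_map_in_subtopology continuous_map_from_subtopology)
  show "open_map (subtopology X B) (subtopology Y (f ` B)) f"
    unfolding open_map_def
  proof (intro allI impI)
    fix W assume "openin (subtopology X B) W"
    then have "openin X W" "W \<subseteq> B" using assms(3) openin_open_subtopology by blast+
    then have "openin Y (f ` W)" using assms(2) open_map_def by blast
    then show "openin (subtopology Y (f ` B)) (f ` W)"
      using \<open>W \<subseteq> B\<close> by (metis image_mono inf.absorb_iff2 openin_subtopology_Int2 inf_commute)
  qed
  show "f ` topspace (subtopology X B) = topspace (subtopology Y (f ` B))"
    using B assms(1) continuous_map_image_subset_topspace by fastforce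
  show "inj_on f (topspace (subtopology X B))" by (rule inj_on_subset[OF assms(4)]) simp
qed

lemma etale_units_open:
  assumes "etale G"
  shows "openin (gtop G) (gunits G)"
proof (subst openin_subopen, intro ballI)
  have tg: "topological_groupoid G" using assms etale_def by blast
  have g: "groupoid G" using tg topological_groupoid_def by blast
  fix x assume x: "x \<in> gunits G"
  then have xc: "x \<in> topspace (gtop G)" using units_sub[OF g] unfolding gcarrier_def by auto
  have "local_homeomorphism (gtop G) (subtopology (gtop G) (gunits G)) (gr G)"
    using assms unfolding etale_def by simp
  then obtain U where U: "openin (gtop G) U" "x \<in> U"
      "homeomorphic_map (subtopology (gtop G) U) (subtopology (subtopology (gtop G) (gunits G)) (gr G ` U)) (gr G)"
    using xc unfolding local_homeomorphism_def by blast
  have inj: "inj_on (gr G) U"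
  proof -
    have "topspace (subtopology (gtop G) U) = U" using U(1) openin_subset by auto
    then show ?thesis using homeomorphic_imp_injective_map[OF U(3)] by simp
  qed
  define W where "W = {a \<in> topspace (gtop G). a \<in> U \<and> gr G a \<in> U}"
  have "openin (gtop G) W"
  proof -
    have "openin (gtop G) {a \<in> topspace (gtop G). gr G a \<in> U}"
      using openin_continuous_map_preimage[OF gr_cont[OF tg] U(1)] .
    then have "openin (gtop G) (U \<inter> {a \<in> topspace (gtop G). gr G a \<in> U})" using U(1) by blast
    moreover have "U \<inter> {a \<in> topspace (gtop G). gr G a \<in> U} = W" unfolding W_def by blast
    ultimately show ?thesis by simp
  qed
  moreover have "x \<in> W" using x xc U unit_fix[OF g x] unfolding W_def by auto
  moreover have "W \<subseteq> gunits G"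
  proof
    fix a assume a: "a \<in> W"
    then have ac: "a \<in> gcarrier G" unfolding W_def gcarrier_def by blast
    have "gr G (gr G a) = gr G a" using grp_ax(4)[OF g ac] .
    then have "gr G a = a" using inj a unfolding W_def inj_on_def by blast
    then show "a \<in> gunits G" using gr_unit[OF g ac] by simp
  qed
  ultimately show "\<exists>T. openin (gtop G) T \<and> x \<in> T \<and> T \<subseteq> gunits G" by blast
qed

lemma units_closed:
  assumes "topological_groupoid G"
  shows "closedin (gtop G) (gunits G)"
proof -
  have g: "groupoid G" using assms topological_groupoid_def by blast
  have "closedin (gtop G) {x \<in> topspace (gtop G). gr G x = id x}"
    using closedin_continuous_maps_eq[OF _ gr_cont[OF assms] continuous_map_id] assms
    unfolding topological_groupoid_def by blast
  moreover have "{x \<in> topspace (gtop G). gr G x = id x} = gunits G"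
    using unit_fix[OF g] units_sub[OF g] gr_unit[OF g] unfolding gcarrier_def
    by auto (metis gr_unit[OF g] gcarrier_def)
  ultimately show ?thesis by simp
qed



locale tw =
  fixes G :: "'g groupoid" and S :: "'s groupoid" and T :: "'r::comm_ring_1 set"
    and i :: "'g \<times> 'r \<Rightarrow> 's" and q :: "'s \<Rightarrow> 'g"
  assumes G_etale: "etale G"
    and T_one: "1 \<in> T"
    and T_inv: "\<forall>z \<in> T. \<exists>w \<in> T. z * w = 1"
    and twist: "discrete_twist G T i q S"
begin

lemma tgS: "topological_groupoid S" using twist unfolding discrete_twist_def by (elim conjE)
lemma S0: "gunits S = i ` (gunits G \<times> {1})" using twist unfolding discrete_twist_def by (elim conjE)
lemma i_cont: "continuous_map (bundle_top G T) (gtop S) i"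
  using twist unfolding discrete_twist_def by (elim conjE)
lemma i_hom: "\<forall>x \<in> gunits G. \<forall>z \<in> T. \<forall>w \<in> T.
        gs S (i (x, z)) = gr S (i (x, w)) \<and> i (x, z * w) = gmul S (i (x, z)) (i (x, w))"
  using twist unfolding discrete_twist_def by (elim conjE)
lemma q_cont: "continuous_map (gtop S) (gtop G) q"
  using twist unfolding discrete_twist_def by (elim conjE)
lemma q_hom: "\<forall>a b. (a, b) \<in> comp_pairs S \<longrightarrow>
        gs G (q a) = gr G (q b) \<and> q (gmul S a b) = gmul G (q a) (q b)"
  using twist unfolding discrete_twist_def by (elim conjE)
lemma q_units: "homeomorphic_map (subtopology (gtop S) (gunits S)) (subtopology (gtop G) (gunits G)) q"
  using twist unfolding discrete_twist_def by (elim conjE)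
lemma fib: "\<forall>x \<in> gunits G. i ` ({x} \<times> T) = {e \<in> gcarrier S. q e = x}"
  using twist unfolding discrete_twist_def by (elim conjE)
lemma i_inj: "inj_on i (gunits G \<times> T)"
  using twist unfolding discrete_twist_def by (elim conjE)
lemma trivs: "\<forall>\<alpha> \<in> gcarrier G. \<exists>B P. \<alpha> \<in> B \<and> local_trivialisation G T i q S B P"
  using twist unfolding discrete_twist_def by (elim conjE)

lemma tgG: "topological_groupoid G" using G_etale unfolding etale_def by (elim conjE)
lemma gG: "groupoid G" using tgG unfolding topological_groupoid_def by (elim conjE)
lemma gS: "groupoid S" using tgS unfolding topological_groupoid_def by (elim conjE)

lemma qhom:
  assumes "a \<in> gcarrier S" "b \<in> gcarrier S" "gs S a = gr S b"
  shows "gs G (q a) = gr G (q b)" "q (gmul S a b) = gmul G (q a) (q b)"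
proof -
  have "(a, b) \<in> comp_pairs S" using assms unfolding comp_pairs_def by blast
  then have "gs G (q a) = gr G (q b) \<and> q (gmul S a b) = gmul G (q a) (q b)"
    by (rule q_hom[rule_format])
  then show "gs G (q a) = gr G (q b)" "q (gmul S a b) = gmul G (q a) (q b)"
    by (rule conjunct1, rule conjunct2)
qed

lemma ihom:
  assumes "x \<in> gunits G" "z \<in> T" "w \<in> T"
  shows "gs S (i (x, z)) = gr S (i (x, w))" "i (x, z * w) = gmul S (i (x, z)) (i (x, w))"
proof -
  have "gs S (i (x, z)) = gr S (i (x, w)) \<and> i (x, z * w) = gmul S (i (x, z)) (i (x, w))"
    using i_hom[rule_format, OF assms] .
  then show "gs S (i (x, z)) = gr S (i (x, w))" "i (x, z * w) = gmul S (i (x, z)) (i (x, w))"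
    by (rule conjunct1, rule conjunct2)
qed

lemma i_in:
  assumes "x \<in> gunits G" "z \<in> T"
  shows "i (x, z) \<in> gcarrier S" "q (i (x, z)) = x"
proof -
  have "i (x, z) \<in> i ` ({x} \<times> T)" using assms(2) by blast
  then have "i (x, z) \<in> {e \<in> gcarrier S. q e = x}" using fib[rule_format, OF assms(1)] by simp
  then show "i (x, z) \<in> gcarrier S" "q (i (x, z)) = x" by simp_all
qed

lemma q_in: "e \<in> gcarrier S \<Longrightarrow> q e \<in> gcarrier G"
  using continuous_map_image_subset_topspace[OF q_cont] unfolding gcarrier_def by blast

lemma i_unit: "x \<in> gunits G \<Longrightarrow> i (x, 1) \<in> gunits S"
  unfolding S0 by blast

lemma unitS:
  assumes "u \<in> gunits S" shows "q u \<in> gunits G" "u = i (q u, 1)"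
proof -
  obtain x where x: "x \<in> gunits G" "u = i (x, 1)" using assms unfolding S0 by blast
  then have "q u = x" using i_in[OF x(1) T_one] by simp
  then show "q u \<in> gunits G" "u = i (q u, 1)" using x by simp_all
qed

lemma i_rs:
  assumes "x \<in> gunits G" "z \<in> T"
  shows "gr S (i (x, z)) = i (x, 1)" "gs S (i (x, z)) = i (x, 1)"
proof -
  have u: "gr S (i (x, 1)) = i (x, 1)" "gs S (i (x, 1)) = i (x, 1)"
    using unit_fix[OF gS i_unit[OF assms(1)]] by simp_all
  show "gs S (i (x, z)) = i (x, 1)" using ihom(1)[OF assms(1) assms(2) T_one] u by simp
  show "gr S (i (x, z)) = i (x, 1)" using ihom(1)[OF assms(1) T_one assms(2)] u by simp
qed

lemma q_rs:
  assumes e: "e \<in> gcarrier S"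
  shows "q (gr S e) = gr G (q e)" "q (gs S e) = gs G (q e)"
proof -
  have r: "gr S e \<in> gcarrier S" "gs S (gr S e) = gr S e" using grp_ax(1,5)[OF gS e] by simp_all
  have "gs G (q (gr S e)) = gr G (q e)" using qhom(1)[OF r(1) e] r(2) by simp
  moreover have "q (gr S e) \<in> gunits G" using unitS(1)[OF gr_unit[OF gS e]] .
  ultimately show "q (gr S e) = gr G (q e)" using unit_fix(2)[OF gG] by metis
  have s: "gs S e \<in> gcarrier S" "gs S e = gr S (gs S e)" using grp_ax(2,6)[OF gS e] by simp_all
  have "gs G (q e) = gr G (q (gs S e))" using qhom(1)[OF e s(1) s(2)] .
  moreover have "q (gs S e) \<in> gunits G" using unitS(1)[OF gs_unit[OF gS e]] .
  ultimately show "q (gs S e) = gs G (q e)" using unit_fix(1)[OF gG] by metis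
qed

lemma rs_S:
  assumes e: "e \<in> gcarrier S"
  shows "gr S e = i (gr G (q e), 1)" "gs S e = i (gs G (q e), 1)"
  using unitS(2)[OF gr_unit[OF gS e]] unitS(2)[OF gs_unit[OF gS e]] q_rs[OF e] by simp_all

lemma phi:
  assumes lt: "local_trivialisation G T i q S B P" and b: "\<beta> \<in> B" and z: "z \<in> T"
  shows "gmul S (i (gr G \<beta>, z)) (P \<beta>) \<in> gcarrier S"
    "q (gmul S (i (gr G \<beta>, z)) (P \<beta>)) = \<beta>"
proof -
  have B: "B \<subseteq> gcarrier G" and cP: "continuous_map (subtopology (gtop G) B) (gtop S) P"
    and sec: "q (P \<beta>) = \<beta>"
    using lt b unfolding local_trivialisation_def open_bisection_def bisection_def by blast+
  have bc: "\<beta> \<in> gcarrier G" using B b by blast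
  have Pc: "P \<beta> \<in> gcarrier S"
    using continuous_map_image_subset_topspace[OF cP] b bc unfolding gcarrier_def by auto
  have x: "gr G \<beta> \<in> gunits G" using gr_unit[OF gG bc] .
  have a: "i (gr G \<beta>, z) \<in> gcarrier S" "q (i (gr G \<beta>, z)) = gr G \<beta>" using i_in[OF x z] by simp_all
  have "gr S (P \<beta>) = i (gr G \<beta>, 1)" using rs_S(1)[OF Pc] sec by simp
  then have comp: "gs S (i (gr G \<beta>, z)) = gr S (P \<beta>)" using i_rs(2)[OF x z] by simp
  show "gmul S (i (gr G \<beta>, z)) (P \<beta>) \<in> gcarrier S" using grp_mul(1)[OF gS a(1) Pc comp] .
  have "q (gmul S (i (gr G \<beta>, z)) (P \<beta>)) = gmul G (gr G \<beta>) \<beta>"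
    using qhom(2)[OF a(1) Pc comp] a(2) sec by simp
  then show "q (gmul S (i (gr G \<beta>, z)) (P \<beta>)) = \<beta>" using grp_ax(8)[OF gG bc] by simp
qed

end


context tw begin

lemma lt_parts:
  assumes "local_trivialisation G T i q S B P"
  shows "openin (gtop G) B" "B \<subseteq> gcarrier G" "inj_on (gr G) B" "inj_on (gs G) B"
    "continuous_map (subtopology (gtop G) B) (gtop S) P"
    "\<And>\<beta>. \<beta> \<in> B \<Longrightarrow> q (P \<beta>) = \<beta>"
    "homeomorphic_map (prod_topology (subtopology (gtop G) B) (discrete_topology T))
        (subtopology (gtop S) {e \<in> gcarrier S. q e \<in> B})
        (\<lambda>(\<beta>, z). gmul S (i (gr G \<beta>, z)) (P \<beta>))"
  using assms unfolding local_trivialisation_def open_bisection_def bisection_def by blast+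

lemma restrict:
  assumes lt: "local_trivialisation G T i q S B P" and B': "openin (gtop G) B'" "B' \<subseteq> B"
  shows "local_trivialisation G T i q S B' P"
proof -
  note L = lt_parts[OF lt]
  define \<phi> where "\<phi> = (\<lambda>(\<beta>, z). gmul S (i (gr G \<beta>, z)) (P \<beta>))"
  define X where "X = prod_topology (subtopology (gtop G) B) (discrete_topology T)"
  define Y where "Y = subtopology (gtop S) {e \<in> gcarrier S. q e \<in> B}"
  have hom: "homeomorphic_map X Y \<phi>" using L(7) unfolding X_def Y_def \<phi>_def .
  have tX: "topspace X = B \<times> T" using L(2) unfolding X_def gcarrier_def by auto
  have tY: "topspace Y = {e \<in> gcarrier S. q e \<in> B}" unfolding Y_def gcarrier_def by auto
  have phi_pt: "\<phi> (\<beta>, z) \<in> gcarrier S \<and> q (\<phi> (\<beta>, z)) = \<beta>" if "\<beta> \<in> B" "z \<in> T" for \<beta> z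
    using phi[OF lt that] unfolding \<phi>_def by simp
  have img: "\<phi> ` (topspace X \<inter> (B' \<times> T)) = topspace Y \<inter> {e \<in> gcarrier S. q e \<in> B'}"
  proof
    show "\<phi> ` (topspace X \<inter> (B' \<times> T)) \<subseteq> topspace Y \<inter> {e \<in> gcarrier S. q e \<in> B'}"
    proof
      fix e assume "e \<in> \<phi> ` (topspace X \<inter> (B' \<times> T))"
      then obtain \<beta> z where bz: "\<beta> \<in> B'" "z \<in> T" "e = \<phi> (\<beta>, z)" using tX by auto
      then have "\<beta> \<in> B" using B'(2) by blast
      then show "e \<in> topspace Y \<inter> {e \<in> gcarrier S. q e \<in> B'}"
        using phi_pt[OF _ bz(2)] bz tY by auto
    qed
    show "topspace Y \<inter> {e \<in> gcarrier S. q e \<in> B'} \<subseteq> \<phi> ` (topspace X \<inter> (B' \<times> T))"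
    proof
      fix e assume e: "e \<in> topspace Y \<inter> {e \<in> gcarrier S. q e \<in> B'}"
      then have "e \<in> \<phi> ` topspace X" using homeomorphic_imp_surjective_map[OF hom] by blast
      then obtain \<beta> z where bz: "\<beta> \<in> B" "z \<in> T" "e = \<phi> (\<beta>, z)" using tX by auto
      then have "q e = \<beta>" using phi_pt by blast
      then have "\<beta> \<in> B'" using e by simp
      then show "e \<in> \<phi> ` (topspace X \<inter> (B' \<times> T))" using bz tX by auto
    qed
  qed
  have h2: "homeomorphic_map (subtopology X (B' \<times> T)) (subtopology Y {e \<in> gcarrier S. q e \<in> B'}) \<phi>"
    by (rule homeomorphic_map_subtopologies[OF hom img])
  have eX: "subtopology X (B' \<times> T) = prod_topology (subtopology (gtop G) B') (discrete_topology T)"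
  proof -
    have "subtopology X (B' \<times> T) = prod_topology (subtopology (subtopology (gtop G) B) B')
        (subtopology (discrete_topology T) T)"
      unfolding X_def by (rule subtopology_Times)
    moreover have "subtopology (discrete_topology T) T = discrete_topology T"
      using subtopology_topspace[of "discrete_topology T"] by simp
    moreover have "subtopology (subtopology (gtop G) B) B' = subtopology (gtop G) B'"
      using B'(2) by (simp add: subtopology_subtopology inf.absorb2)
    ultimately show ?thesis by simp
  qed
  have eY: "subtopology Y {e \<in> gcarrier S. q e \<in> B'} = subtopology (gtop S) {e \<in> gcarrier S. q e \<in> B'}"
  proof -
    have "{e \<in> gcarrier S. q e \<in> B} \<inter> {e \<in> gcarrier S. q e \<in> B'} = {e \<in> gcarrier S. q e \<in> B'}"
      using B'(2) by blast
    then show ?thesis unfolding Y_def by (simp add: subtopology_subtopology)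
  qed
  show ?thesis
    unfolding local_trivialisation_def open_bisection_def bisection_def
  proof (intro conjI)
    show "openin (gtop G) B'" by fact
    show "B' \<subseteq> gcarrier G" using L(2) B'(2) by blast
    show "inj_on (gr G) B'" using L(3) B'(2) by (rule inj_on_subset)
    show "inj_on (gs G) B'" using L(4) B'(2) by (rule inj_on_subset)
    show "continuous_map (subtopology (gtop G) B') (gtop S) P"
      using L(5) B'(2) by (rule continuous_map_from_subtopology_mono)
    show "\<forall>\<beta>\<in>B'. q (P \<beta>) = \<beta>" using L(6) B'(2) by blast
    show "homeomorphic_map (prod_topology (subtopology (gtop G) B') (discrete_topology T))
     (subtopology (gtop S) {e \<in> gcarrier S. q e \<in> B'}) (\<lambda>(\<beta>, z). gmul S (i (gr G \<beta>, z)) (P \<beta>))"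
      using h2 unfolding eX eY \<phi>_def .
  qed
qed

end


context tw begin

lemma part_a: "etale S"
  unfolding etale_def local_homeomorphism_def
proof (intro conjI ballI)
  show "topological_groupoid S" by (rule tgS)
  show "gr S ` topspace (gtop S) \<subseteq> topspace (subtopology (gtop S) (gunits S))"
    using grp_ax(1)[OF gS] gr_unit[OF gS] unfolding gcarrier_def by auto
  fix e assume e: "e \<in> topspace (gtop S)"
  then have ec: "e \<in> gcarrier S" unfolding gcarrier_def .
  obtain B P where BP: "q e \<in> B" "local_trivialisation G T i q S B P"
    using trivs q_in[OF ec] by blast
  note L = lt_parts[OF BP(2)]
  define \<phi> where "\<phi> = (\<lambda>(\<beta>, z). gmul S (i (gr G \<beta>, z)) (P \<beta>))"
  define X where "X = prod_topology (subtopology (gtop G) B) (discrete_topology T)"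
  define Q where "Q = {e \<in> gcarrier S. q e \<in> B}"
  define Y where "Y = subtopology (gtop S) Q"
  have hom: "homeomorphic_map X Y \<phi>" using L(7) unfolding X_def Y_def \<phi>_def Q_def .
  have tX: "topspace X = B \<times> T" using L(2) unfolding X_def gcarrier_def by auto
  have tY: "topspace Y = Q" unfolding Y_def Q_def gcarrier_def by auto
  have phi_pt: "\<phi> (\<beta>, z) \<in> gcarrier S \<and> q (\<phi> (\<beta>, z)) = \<beta>" if "\<beta> \<in> B" "z \<in> T" for \<beta> z
    using phi[OF BP(2) that] unfolding \<phi>_def by simp
  have "e \<in> Q" using ec BP(1) unfolding Q_def by simp
  then have "e \<in> \<phi> ` topspace X" using homeomorphic_imp_surjective_map[OF hom] tY by simp
  then obtain \<beta>0 z0 where bz: "\<beta>0 \<in> B" "z0 \<in> T" "e = \<phi> (\<beta>0, z0)" using tX by auto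
  define U where "U = \<phi> ` (B \<times> {z0})"
  have U_alt: "U = (\<lambda>\<beta>. \<phi> (\<beta>, z0)) ` B" unfolding U_def by auto
  have eU: "e \<in> U" using bz unfolding U_def by blast
  have Uc: "U \<subseteq> gcarrier S" using phi_pt bz(2) unfolding U_alt by blast
  have qU: "q ` U = B" using phi_pt[OF _ bz(2)] unfolding U_alt image_image by simp
  have Qopen: "openin (gtop S) Q"
    using openin_continuous_map_preimage[OF q_cont L(1)] unfolding Q_def gcarrier_def .
  have "openin X (B \<times> {z0})"
    unfolding X_def openin_prod_Times_iff using L(1) bz(2)
    by (simp add: openin_subtopology_refl openin_subset)
  then have "openin Y U"
    using homeomorphic_map_openness[OF hom, of "B \<times> {z0}"] tX bz(2) unfolding U_def by auto
  then have Uopen: "openin (gtop S) U" using Qopen unfolding Y_def by (rule openin_trans_full)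
  have hq: "homeomorphic_map (subtopology (gtop S) U) (subtopology (gtop G) B) q"
  proof -
    have "homeomorphic_maps (subtopology (gtop S) U) (subtopology (gtop G) B) q (\<lambda>\<beta>. \<phi> (\<beta>, z0))"
      unfolding homeomorphic_maps_def
    proof (intro conjI ballI)
      show "continuous_map (subtopology (gtop S) U) (subtopology (gtop G) B) q"
        unfolding continuous_map_in_subtopology
      proof
        show "continuous_map (subtopology (gtop S) U) (gtop G) q"
          using q_cont by (rule continuous_map_from_subtopology)
        show "q \<in> topspace (subtopology (gtop S) U) \<rightarrow> B" using qU by auto
      qed
      have c1: "continuous_map (subtopology (gtop G) B) X (\<lambda>\<beta>. (\<beta>, z0))"
        unfolding X_def
        by (rule continuous_map_pairedI) (use bz(2) in \<open>simp_all add: continuous_map_id[unfolded id_def]\<close>)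
      have "continuous_map (subtopology (gtop G) B) Y (\<phi> \<circ> (\<lambda>\<beta>. (\<beta>, z0)))"
        using continuous_map_compose[OF c1 homeomorphic_imp_continuous_map[OF hom]] .
      then have c2: "continuous_map (subtopology (gtop G) B) (gtop S) (\<lambda>\<beta>. \<phi> (\<beta>, z0))"
        unfolding Y_def o_def continuous_map_in_subtopology by blast
      show "continuous_map (subtopology (gtop G) B) (subtopology (gtop S) U) (\<lambda>\<beta>. \<phi> (\<beta>, z0))"
        unfolding continuous_map_in_subtopology
      proof
        show "continuous_map (subtopology (gtop G) B) (gtop S) (\<lambda>\<beta>. \<phi> (\<beta>, z0))" by (rule c2)
        show "(\<lambda>\<beta>. \<phi> (\<beta>, z0)) \<in> topspace (subtopology (gtop G) B) \<rightarrow> U" unfolding U_alt by auto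
      qed
      fix x assume "x \<in> topspace (subtopology (gtop S) U)"
      then obtain \<beta> where "\<beta> \<in> B" "x = \<phi> (\<beta>, z0)" unfolding U_alt by auto
      then show "\<phi> (q x, z0) = x" using phi_pt[OF _ bz(2)] by simp
    next
      fix y assume "y \<in> topspace (subtopology (gtop G) B)"
      then have "y \<in> B" by simp
      then show "q (\<phi> (y, z0)) = y" using phi_pt[OF _ bz(2)] by simp
    qed
    then show ?thesis by (rule homeomorphic_maps_imp_map)
  qed
  have lhG: "local_homeomorphism (gtop G) (subtopology (gtop G) (gunits G)) (gr G)"
    using G_etale unfolding etale_def by (elim conjE)
  have crG: "continuous_map (gtop G) (subtopology (gtop G) (gunits G)) (gr G)"
    unfolding continuous_map_in_subtopology Pi_iff
    using gr_cont[OF tgG] gr_unit[OF gG] unfolding gcarrier_def by blast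
  have hr: "homeomorphic_map (subtopology (gtop G) B)
      (subtopology (subtopology (gtop G) (gunits G)) (gr G ` B)) (gr G)"
    by (rule open_inj_homeo[OF crG local_homeo_open[OF lhG] L(1) L(3)])
  have rBopen: "openin (subtopology (gtop G) (gunits G)) (gr G ` B)"
    using local_homeo_open[OF lhG] L(1) unfolding open_map_def by blast
  have rBsub: "gr G ` B \<subseteq> topspace (subtopology (gtop G) (gunits G))"
    using rBopen by (rule openin_subset)
  obtain g0 where hm: "homeomorphic_maps (subtopology (gtop S) (gunits S)) (subtopology (gtop G) (gunits G)) q g0"
    using q_units homeomorphic_map_maps by blast
  have hg0: "homeomorphic_map (subtopology (gtop G) (gunits G)) (subtopology (gtop S) (gunits S)) g0"
    using hm homeomorphic_maps_sym homeomorphic_maps_imp_map by blast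
  define V where "V = g0 ` (gr G ` B)"
  have Vsub: "V \<subseteq> topspace (subtopology (gtop S) (gunits S))"
    using continuous_map_image_subset_topspace[OF homeomorphic_imp_continuous_map[OF hg0]] rBsub
    unfolding V_def by blast
  have hg: "homeomorphic_map (subtopology (subtopology (gtop G) (gunits G)) (gr G ` B))
      (subtopology (subtopology (gtop S) (gunits S)) V) g0"
  proof (rule homeomorphic_map_subtopologies[OF hg0])
    have "topspace (subtopology (gtop G) (gunits G)) \<inter> gr G ` B = gr G ` B" using rBsub by blast
    moreover have "topspace (subtopology (gtop S) (gunits S)) \<inter> V = V" using Vsub by blast
    ultimately show "g0 ` (topspace (subtopology (gtop G) (gunits G)) \<inter> gr G ` B) =
        topspace (subtopology (gtop S) (gunits S)) \<inter> V" unfolding V_def by simp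
  qed
  have hc: "homeomorphic_map (subtopology (gtop S) U) (subtopology (subtopology (gtop S) (gunits S)) V)
      (g0 \<circ> (gr G \<circ> q))"
    by (rule homeomorphic_map_compose[OF homeomorphic_map_compose[OF hq hr] hg])
  have eqn: "(g0 \<circ> (gr G \<circ> q)) x = gr S x" if "x \<in> gcarrier S" for x
  proof -
    have "gr S x \<in> topspace (subtopology (gtop S) (gunits S))"
      using grp_ax(1)[OF gS that] gr_unit[OF gS that] unfolding gcarrier_def by simp
    then have "g0 (q (gr S x)) = gr S x" using hm unfolding homeomorphic_maps_def by blast
    then show ?thesis using q_rs(1)[OF that] by simp
  qed
  have hS: "homeomorphic_map (subtopology (gtop S) U) (subtopology (subtopology (gtop S) (gunits S)) V) (gr S)"
    by (rule homeomorphic_map_eq[OF hc]) (use eqn Uc in \<open>auto simp: gcarrier_def\<close>)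
  have VU: "V = gr S ` U"
  proof -
    have "gr S ` U = (g0 \<circ> (gr G \<circ> q)) ` U" using eqn Uc by (auto intro!: image_cong)
    also have "\<dots> = g0 ` (gr G ` (q ` U))" by (simp add: image_comp)
    finally show ?thesis unfolding V_def qU by simp
  qed
  have Vopen: "openin (subtopology (gtop S) (gunits S)) V"
    using homeomorphic_map_openness[OF hg0 rBsub] rBopen unfolding V_def by simp
  show "\<exists>U. openin (gtop S) U \<and> e \<in> U \<and> openin (subtopology (gtop S) (gunits S)) (gr S ` U) \<and>
        homeomorphic_map (subtopology (gtop S) U) (subtopology (subtopology (gtop S) (gunits S)) (gr S ` U)) (gr S)"
    using Uopen eU Vopen hS unfolding VU by blast
qed

end


context tw begin

lemma G0_open: "openin (gtop G) (gunits G)" by (rule etale_units_open[OF G_etale])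
lemma S0_open: "openin (gtop S) (gunits S)" by (rule etale_units_open[OF part_a])

definition tau :: "'r \<Rightarrow> 's \<Rightarrow> 's" where
  "tau z e = gmul S e (i (gs G (q e), z))"

lemma tau_in:
  assumes z: "z \<in> T" and e: "e \<in> gcarrier S"
  shows "tau z e \<in> gcarrier S" "q (tau z e) = q e" "i (gs G (q e), z) \<in> gcarrier S"
    "gs S e = gr S (i (gs G (q e), z))"
proof -
  have qe: "q e \<in> gcarrier G" using q_in[OF e] .
  have x: "gs G (q e) \<in> gunits G" using gs_unit[OF gG qe] .
  have a: "i (gs G (q e), z) \<in> gcarrier S" "q (i (gs G (q e), z)) = gs G (q e)" using i_in[OF x z] by simp_all
  show "i (gs G (q e), z) \<in> gcarrier S" by (rule a(1))
  have comp: "gs S e = gr S (i (gs G (q e), z))" using rs_S(2)[OF e] i_rs(1)[OF x z] by simp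
  show "gs S e = gr S (i (gs G (q e), z))" by (rule comp)
  show "tau z e \<in> gcarrier S" unfolding tau_def using grp_mul(1)[OF gS e a(1) comp] .
  have "q (tau z e) = gmul G (q e) (gs G (q e))" unfolding tau_def using qhom(2)[OF e a(1) comp] a(2) by simp
  then show "q (tau z e) = q e" using grp_ax(9)[OF gG qe] by simp
qed

lemma tau_inv:
  assumes z: "z \<in> T" and w: "w \<in> T" and zw: "z * w = 1" and e: "e \<in> gcarrier S"
  shows "tau w (tau z e) = e"
proof -
  have qe: "q e \<in> gcarrier G" using q_in[OF e] .
  define x where "x = gs G (q e)"
  have x: "x \<in> gunits G" unfolding x_def using gs_unit[OF gG qe] .
  have a: "i (x, z) \<in> gcarrier S" using i_in[OF x z] by simp
  have b: "i (x, w) \<in> gcarrier S" using i_in[OF x w] by simp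
  have c1: "gs S e = gr S (i (x, z))" using tau_in(4)[OF z e] unfolding x_def .
  have c2: "gs S (i (x, z)) = gr S (i (x, w))" using i_rs[OF x z] i_rs[OF x w] by simp
  have "tau w (tau z e) = gmul S (gmul S e (i (x, z))) (i (x, w))"
    unfolding tau_def[of w] tau_in(2)[OF z e] unfolding tau_def x_def by simp
  also have "\<dots> = gmul S e (gmul S (i (x, z)) (i (x, w)))"
    by (rule grp_assoc[OF gS e a b c1 c2])
  also have "\<dots> = gmul S e (i (x, 1))" using ihom(2)[OF x z w] zw by simp
  also have "\<dots> = gmul S e (gs S e)" using rs_S(2)[OF e] unfolding x_def by simp
  also have "\<dots> = e" by (rule grp_ax(9)[OF gS e])
  finally show ?thesis .
qed

lemma tau_cont:
  assumes z: "z \<in> T"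
  shows "continuous_map (gtop S) (gtop S) (tau z)"
proof -
  have c0: "continuous_map (gtop S) (subtopology (gtop G) (gunits G)) (\<lambda>e. gs G (q e))"
    unfolding continuous_map_in_subtopology
  proof
    show "continuous_map (gtop S) (gtop G) (\<lambda>e. gs G (q e))"
      using continuous_map_compose[OF q_cont gs_cont[OF tgG]] unfolding o_def .
    show "(\<lambda>e. gs G (q e)) \<in> topspace (gtop S) \<rightarrow> gunits G"
      using gs_unit[OF gG] q_in unfolding gcarrier_def by blast
  qed
  have c1: "continuous_map (gtop S) (bundle_top G T) (\<lambda>e. (gs G (q e), z))"
    unfolding bundle_top_def
    by (rule continuous_map_pairedI[OF c0]) (simp add: z)
  have c2: "continuous_map (gtop S) (gtop S) (\<lambda>e. i (gs G (q e), z))"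
    using continuous_map_compose[OF c1 i_cont] unfolding o_def .
  have c3: "continuous_map (gtop S) (subtopology (prod_topology (gtop S) (gtop S)) (comp_pairs S))
      (\<lambda>e. (e, i (gs G (q e), z)))"
    unfolding continuous_map_in_subtopology
  proof
    show "continuous_map (gtop S) (prod_topology (gtop S) (gtop S)) (\<lambda>e. (e, i (gs G (q e), z)))"
      by (rule continuous_map_pairedI[OF _ c2]) (simp add: continuous_map_id[unfolded id_def])
    show "(\<lambda>e. (e, i (gs G (q e), z))) \<in> topspace (gtop S) \<rightarrow> comp_pairs S"
    proof
      fix e assume "e \<in> topspace (gtop S)"
      then have e: "e \<in> gcarrier S" unfolding gcarrier_def .
      show "(e, i (gs G (q e), z)) \<in> comp_pairs S"
        using e tau_in(3,4)[OF z e] unfolding comp_pairs_def by simp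
    qed
  qed
  have cm: "continuous_map (subtopology (prod_topology (gtop S) (gtop S)) (comp_pairs S)) (gtop S)
       (\<lambda>(a, b). gmul S a b)"
    using tgS unfolding topological_groupoid_def by (elim conjE)
  show ?thesis
    using continuous_map_compose[OF c3 cm] unfolding o_def tau_def[abs_def] by simp
qed

lemma tau_homeo:
  assumes z: "z \<in> T"
  shows "homeomorphic_map (gtop S) (gtop S) (tau z)"
proof -
  obtain w where w: "w \<in> T" "z * w = 1" using T_inv z by blast
  have wz: "w * z = 1" using w(2) by (simp add: mult.commute)
  have "homeomorphic_maps (gtop S) (gtop S) (tau z) (tau w)"
    unfolding homeomorphic_maps_def
    using tau_cont[OF z] tau_cont[OF w(1)] tau_inv[OF z w(1) w(2)] tau_inv[OF w(1) z wz]
    unfolding gcarrier_def by blast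
  then show ?thesis by (rule homeomorphic_maps_imp_map)
qed

lemma i_slice_open:
  assumes V: "openin (subtopology (gtop G) (gunits G)) V" and z: "z \<in> T"
  shows "openin (gtop S) (i ` (V \<times> {z}))"
proof -
  have VG: "V \<subseteq> gunits G" using openin_subset[OF V] by simp
  have Vo: "openin (gtop G) V" using V G0_open by (rule openin_trans_full)
  define A where "A = {e \<in> topspace (gtop S). q e \<in> V} \<inter> gunits S"
  have Ao: "openin (gtop S) A" unfolding A_def
    using openin_continuous_map_preimage[OF q_cont Vo] S0_open by (rule openin_Int)
  have A_eq: "A = i ` (V \<times> {1})"
  proof
    show "A \<subseteq> i ` (V \<times> {1})"
    proof
      fix e assume "e \<in> A"
      then have "e \<in> gunits S" "q e \<in> V" unfolding A_def by auto
      then show "e \<in> i ` (V \<times> {1})" using unitS(2) by blast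
    qed
    show "i ` (V \<times> {1}) \<subseteq> A"
    proof
      fix e assume "e \<in> i ` (V \<times> {1})"
      then obtain x where x: "x \<in> V" "e = i (x, 1)" by blast
      then have xG: "x \<in> gunits G" using VG by blast
      show "e \<in> A" unfolding A_def using i_in[OF xG T_one] i_unit[OF xG] x unfolding gcarrier_def by simp
    qed
  qed
  have tau_pt: "tau z (i (x, 1)) = i (x, z)" if "x \<in> V" for x
  proof -
    have xG: "x \<in> gunits G" using VG that by blast
    have "tau z (i (x, 1)) = gmul S (i (x, 1)) (i (x, z))"
      unfolding tau_def using i_in(2)[OF xG T_one] unit_fix(2)[OF gG xG] by simp
    also have "\<dots> = i (x, 1 * z)" using ihom(2)[OF xG T_one z] by simp
    finally show ?thesis by simp
  qed
  have "i ` (V \<times> {z}) = tau z ` A"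
    unfolding A_eq using tau_pt by (auto simp: image_iff)
  moreover have "A \<subseteq> topspace (gtop S)" unfolding A_def by blast
  ultimately show ?thesis using homeomorphic_map_openness[OF tau_homeo[OF z]] Ao by simp
qed

lemma i_open: "open_map (bundle_top G T) (gtop S) i"
  unfolding open_map_def
proof (intro allI impI)
  fix W assume W: "openin (bundle_top G T) W"
  show "openin (gtop S) (i ` W)"
  proof (subst openin_subopen, intro ballI)
    fix y assume "y \<in> i ` W"
    then obtain x z where xz: "(x, z) \<in> W" "y = i (x, z)" by auto
    have "\<forall>x y. (x, y) \<in> W \<longrightarrow> (\<exists>U V. openin (subtopology (gtop G) (gunits G)) U \<and>
        openin (discrete_topology T) V \<and> x \<in> U \<and> y \<in> V \<and> U \<times> V \<subseteq> W)"
      using W unfolding bundle_top_def openin_prod_topology_alt .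
    then have "\<exists>U V. openin (subtopology (gtop G) (gunits G)) U \<and>
        openin (discrete_topology T) V \<and> x \<in> U \<and> z \<in> V \<and> U \<times> V \<subseteq> W"
      using xz(1) by blast
    then obtain U V where UV: "openin (subtopology (gtop G) (gunits G)) U" "openin (discrete_topology T) V"
        "x \<in> U" "z \<in> V" "U \<times> V \<subseteq> W"
      by (elim exE conjE)
    have zT: "z \<in> T" using openin_subset[OF UV(2)] UV(4) by auto
    have "openin (gtop S) (i ` (U \<times> {z}))" by (rule i_slice_open[OF UV(1) zT])
    moreover have "y \<in> i ` (U \<times> {z})" using xz UV(3) by blast
    moreover have "i ` (U \<times> {z}) \<subseteq> i ` W" using UV(4,5) by blast
    ultimately show "\<exists>T. openin (gtop S) T \<and> y \<in> T \<and> T \<subseteq> i ` W" by blast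
  qed
qed

lemma top_bundle: "topspace (bundle_top G T) = gunits G \<times> T"
  using units_sub[OF gG] unfolding bundle_top_def gcarrier_def by auto

lemma part_b: "openin (gtop S) (i ` (gunits G \<times> T)) \<and>
       homeomorphic_map (bundle_top G T) (subtopology (gtop S) (i ` (gunits G \<times> T))) i"
proof
  show o: "openin (gtop S) (i ` (gunits G \<times> T))"
    using i_open unfolding open_map_def top_bundle[symmetric] by blast
  have sub: "i ` (gunits G \<times> T) \<subseteq> topspace (gtop S)" using openin_subset[OF o] .
  show "homeomorphic_map (bundle_top G T) (subtopology (gtop S) (i ` (gunits G \<times> T))) i"
  proof (rule bijective_open_imp_homeomorphic_map)
    show "continuous_map (bundle_top G T) (subtopology (gtop S) (i ` (gunits G \<times> T))) i"
      unfolding continuous_map_in_subtopology using i_cont top_bundle by auto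
    show "open_map (bundle_top G T) (subtopology (gtop S) (i ` (gunits G \<times> T))) i"
      by (rule open_map_into_subtopology[OF i_open]) (auto simp: top_bundle)
    show "i ` topspace (bundle_top G T) = topspace (subtopology (gtop S) (i ` (gunits G \<times> T)))"
      using sub top_bundle by auto
    show "inj_on i (topspace (bundle_top G T))" using i_inj top_bundle by simp
  qed
qed

lemma part_c:
  assumes a: "\<alpha> \<in> gcarrier G"
  shows "\<exists>B P. \<alpha> \<in> B \<and> local_trivialisation G T i q S B P \<and> P ` (gunits G \<inter> B) \<subseteq> gunits S"
proof (cases "\<alpha> \<in> gunits G")
  case True
  have lt: "local_trivialisation G T i q S (gunits G) (\<lambda>\<beta>. i (\<beta>, 1))"
    unfolding local_trivialisation_def open_bisection_def bisection_def
  proof (intro conjI ballI)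
    show "openin (gtop G) (gunits G)" by (rule G0_open)
    show "gunits G \<subseteq> gcarrier G" by (rule units_sub[OF gG])
    show "inj_on (gr G) (gunits G)" by (rule inj_onI) (metis unit_fix(1)[OF gG])
    show "inj_on (gs G) (gunits G)" by (rule inj_onI) (metis unit_fix(2)[OF gG])
    have c1: "continuous_map (subtopology (gtop G) (gunits G)) (bundle_top G T) (\<lambda>\<beta>. (\<beta>, 1))"
      unfolding bundle_top_def
      by (rule continuous_map_pairedI) (simp_all add: continuous_map_id[unfolded id_def] T_one)
    show "continuous_map (subtopology (gtop G) (gunits G)) (gtop S) (\<lambda>\<beta>. i (\<beta>, 1))"
      using continuous_map_compose[OF c1 i_cont] unfolding o_def .
    fix \<beta> assume "\<beta> \<in> gunits G"
    then show "q (i (\<beta>, 1)) = \<beta>" using i_in(2)[OF _ T_one] by simp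
  next
    have eqQ: "{e \<in> gcarrier S. q e \<in> gunits G} = i ` (gunits G \<times> T)"
    proof
      show "{e \<in> gcarrier S. q e \<in> gunits G} \<subseteq> i ` (gunits G \<times> T)"
      proof
        fix e assume e: "e \<in> {e \<in> gcarrier S. q e \<in> gunits G}"
        then have "e \<in> i ` ({q e} \<times> T)" using fib[rule_format, of "q e"] by simp
        moreover have "{q e} \<times> T \<subseteq> gunits G \<times> T" using e by auto
        ultimately show "e \<in> i ` (gunits G \<times> T)" by (meson image_mono subsetD)
      qed
      show "i ` (gunits G \<times> T) \<subseteq> {e \<in> gcarrier S. q e \<in> gunits G}"
        using i_in by auto
    qed
    have hb: "homeomorphic_map (bundle_top G T) (subtopology (gtop S) (i ` (gunits G \<times> T))) i"
      using part_b by (elim conjE)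
    show "homeomorphic_map (prod_topology (subtopology (gtop G) (gunits G)) (discrete_topology T))
        (subtopology (gtop S) {e \<in> gcarrier S. q e \<in> gunits G})
        (\<lambda>(\<beta>, z). gmul S (i (gr G \<beta>, z)) (i (\<beta>, 1)))"
      unfolding eqQ bundle_top_def[symmetric]
    proof (rule homeomorphic_map_eq[OF hb])
      fix x assume "x \<in> topspace (bundle_top G T)"
      then obtain \<beta> z where bz: "x = (\<beta>, z)" "\<beta> \<in> gunits G" "z \<in> T" using top_bundle by auto
      have "gmul S (i (gr G \<beta>, z)) (i (\<beta>, 1)) = gmul S (i (\<beta>, z)) (i (\<beta>, 1))"
        using unit_fix(1)[OF gG bz(2)] by simp
      also have "\<dots> = i (\<beta>, z * 1)" using ihom(2)[OF bz(2,3) T_one] by simp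
      finally show "i x = (\<lambda>(\<beta>, z). gmul S (i (gr G \<beta>, z)) (i (\<beta>, 1))) x" using bz by simp
    qed
  qed
  moreover have "(\<lambda>\<beta>. i (\<beta>, 1)) ` (gunits G \<inter> gunits G) \<subseteq> gunits S" using i_unit by blast
  ultimately show ?thesis using True by blast
next
  case False
  obtain B P where BP: "\<alpha> \<in> B" "local_trivialisation G T i q S B P" using trivs a by blast
  have "openin (gtop G) (B - gunits G)"
    using lt_parts(1)[OF BP(2)] units_closed[OF tgG] by (rule openin_diff)
  then have "local_trivialisation G T i q S (B - gunits G) P"
    using restrict[OF BP(2)] by blast
  moreover have "\<alpha> \<in> B - gunits G" using BP(1) False by blast
  moreover have "P ` (gunits G \<inter> (B - gunits G)) \<subseteq> gunits S" by blast
  ultimately show ?thesis by blast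
qed

lemma part_d:
  assumes am: "ample G" and a: "\<alpha> \<in> gcarrier G"
  shows "\<exists>B P. \<alpha> \<in> B \<and> local_trivialisation G T i q S B P \<and> compactin (gtop G) B"
proof -
  obtain B P where BP: "\<alpha> \<in> B" "local_trivialisation G T i q S B P" using trivs a by blast
  have "\<forall>U x. openin (gtop G) U \<and> x \<in> U \<longrightarrow>
        (\<exists>B. open_bisection G B \<and> compactin (gtop G) B \<and> x \<in> B \<and> B \<subseteq> U)"
    using am unfolding ample_def by (elim conjE)
  then obtain B' where B': "open_bisection G B'" "compactin (gtop G) B'" "\<alpha> \<in> B'" "B' \<subseteq> B"
    using lt_parts(1)[OF BP(2)] BP(1) by meson
  have "local_trivialisation G T i q S B' P"
    using restrict[OF BP(2)] B'(1,4) unfolding open_bisection_def by blast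
  then show ?thesis using B' by blast
qed

end

theorem lemma4p3:
  fixes G :: "'g groupoid" and S :: "'s groupoid" and T :: "'r::comm_ring_1 set"
    and i :: "'g \<times> 'r \<Rightarrow> 's" and q :: "'s \<Rightarrow> 'g"
  assumes G_etale: "etale G"
    and T_units: "\<forall>z \<in> T. z dvd 1"
    and T_one: "1 \<in> T"
    and T_mult: "\<forall>z \<in> T. \<forall>w \<in> T. z * w \<in> T"
    and T_inv: "\<forall>z \<in> T. \<exists>w \<in> T. z * w = 1"
    and twist: "discrete_twist G T i q S"
  shows "etale S
    \<and> (openin (gtop S) (i ` (gunits G \<times> T)) \<and>
       homeomorphic_map (bundle_top G T) (subtopology (gtop S) (i ` (gunits G \<times> T))) i)
    \<and> (\<forall>\<alpha> \<in> gcarrier G. \<exists>B P. \<alpha> \<in> B \<and> local_trivialisation G T i q S B P \<and>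
          P ` (gunits G \<inter> B) \<subseteq> gunits S)
    \<and> (ample G \<longrightarrow> (\<forall>\<alpha> \<in> gcarrier G. \<exists>B P. \<alpha> \<in> B \<and> local_trivialisation G T i q S B P \<and>
          compactin (gtop G) B))"
proof -
  interpret tw G S T i q using G_etale T_one T_inv twist by unfold_locales
  show ?thesis using part_a part_b part_c part_d by blast
qed


end
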